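(* Let $F,K\ge1$ and $0\le Z< F$ be integers. If there exists an $S$-PDA$(F,K,Z)$ with $|S|=\dfrac{K(F-Z)}{Z+1}$, then $K=\ell\binom{F}{Z}$ for some integer $\ell\ge1$.
   Context: A placement delivery array $S$-PDA$(F,K,Z)$ is an $F\times K$ array $R=(r_{j,k})$, $1\le j\le F$, $1\le k\le K$, over a finite set $S$ such that: (1) each cell is either empty or contains an element of $S$; (2) each column contains exactly $Z$ empty cells; (3) each element of $S$ occurs at most once in each row and at most once in each column; (4) if two distinct nonempty cells satisfy $r_{j_1,k_1}=r_{j_2,k_2}=t\in S$, then the cells $r_{j_1,k_2}$ and $r_{j_2,k_1}$ are empty. *)

theory Defs
  imports Complex_Main
begin

text \<open>An F x K array over S: rows 1..F, columns 1..K; a cell is None (empty)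
or Some t with t in S. Values outside the index ranges are irrelevant.\<close>

definition is_PDA :: "'a set \<Rightarrow> nat \<Rightarrow> nat \<Rightarrow> nat \<Rightarrow> (nat \<Rightarrow> nat \<Rightarrow> 'a option) \<Rightarrow> bool" where
  "is_PDA S F K Z R \<longleftrightarrow>
     finite S \<and>
     (\<forall>j\<in>{1..F}. \<forall>k\<in>{1..K}. \<forall>t. R j k = Some t \<longrightarrow> t \<in> S) \<and>
     (\<forall>k\<in>{1..K}. card {j\<in>{1..F}. R j k = None} = Z) \<and>
     (\<forall>t. \<forall>j\<in>{1..F}. \<forall>k1\<in>{1..K}. \<forall>k2\<in>{1..K}.
        R j k1 = Some t \<and> R j k2 = Some t \<longrightarrow> k1 = k2) \<and>
     (\<forall>t. \<forall>k\<in>{1..K}. \<forall>j1\<in>{1..F}. \<forall>j2\<in>{1..F}.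
        R j1 k = Some t \<and> R j2 k = Some t \<longrightarrow> j1 = j2) \<and>
     (\<forall>t. \<forall>j1\<in>{1..F}. \<forall>j2\<in>{1..F}. \<forall>k1\<in>{1..K}. \<forall>k2\<in>{1..K}.
        (j1, k1) \<noteq> (j2, k2) \<and> R j1 k1 = Some t \<and> R j2 k2 = Some t \<longrightarrow>
        R j1 k2 = None \<and> R j2 k1 = None)"

end

theory Submission
  imports Defs
begin

theorem mainTheorem6:
  fixes S :: "'a set" and F K Z :: nat and R :: "nat \<Rightarrow> nat \<Rightarrow> 'a option"
  assumes "F \<ge> 1" and "K \<ge> 1" and "Z < F"
    and "is_PDA S F K Z R"
    and "real (card S) = real K * (real F - real Z) / (real Z + 1)"
  shows "\<exists>l::nat. l \<ge> 1 \<and> K = l * (F choose Z)"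
proof -
  note P = assms(4)[unfolded is_PDA_def]
  have finS: "finite S" using P by blast
  have inS: "\<And>j k t. j\<in>{1..F} \<Longrightarrow> k\<in>{1..K} \<Longrightarrow> R j k = Some t \<Longrightarrow> t \<in> S" using P by blast
  define E where "E k = {j\<in>{1..F}. R j k = None}" for k
  have cardE: "\<And>k. k\<in>{1..K} \<Longrightarrow> card (E k) = Z" using P unfolding E_def by blast
  have rowc: "\<And>t j k1 k2. j\<in>{1..F} \<Longrightarrow> k1\<in>{1..K} \<Longrightarrow> k2\<in>{1..K} \<Longrightarrow> R j k1 = Some t \<Longrightarrow> R j k2 = Some t \<Longrightarrow> k1 = k2"
    using P by blast
  have c4: "\<And>t j1 j2 k1 k2. j1\<in>{1..F} \<Longrightarrow> j2\<in>{1..F} \<Longrightarrow> k1\<in>{1..K} \<Longrightarrow> k2\<in>{1..K} \<Longrightarrow>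
      (j1, k1) \<noteq> (j2, k2) \<Longrightarrow> R j1 k1 = Some t \<Longrightarrow> R j2 k2 = Some t \<Longrightarrow> R j1 k2 = None"
    using P by blast
  have cardS: "card S * (Z+1) = K * (F - Z)"
  proof -
    have "real (card S) * (real Z + 1) = real K * (real F - real Z)"
      using assms(5) by (simp add: field_simps)
    also have "real F - real Z = real (F - Z)" using assms(3) by simp
    finally have "real (card S * (Z+1)) = real (K * (F - Z))" by (simp only: of_nat_mult of_nat_add of_nat_1)
    thus ?thesis by (simp only: of_nat_eq_iff)
  qed
  define C where "C t = {(k,j). k\<in>{1..K} \<and> j\<in>{1..F} \<and> R j k = Some t}" for t
  have finC: "finite (C t)" for t
    by (rule finite_subset[of _ "{1..K} \<times> {1..F}"]) (auto simp: C_def)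
  have le: "card (C t) \<le> Z + 1" for t
  proof (cases "C t = {}")
    case True thus ?thesis by simp
  next
    case False
    then obtain k j where kj: "(k,j) \<in> C t" by auto
    have inj: "inj_on snd (C t - {(k,j)})"
    proof (rule inj_onI)
      fix x y assume "x \<in> C t - {(k,j)}" "y \<in> C t - {(k,j)}" "snd x = snd y"
      thus "x = y" using rowc[of "snd x" "fst x" "fst y" t] by (auto simp: C_def)
    qed
    have sub: "snd ` (C t - {(k,j)}) \<subseteq> E k"
      using kj by (auto simp: C_def E_def intro: c4)
    have "card (C t - {(k,j)}) \<le> Z"
      using card_image[OF inj] card_mono[OF _ sub] cardE[of k] kj
      by (auto simp: E_def C_def)
    thus ?thesis using finC[of t] kj by auto
  qed
  define N where "N = (SIGMA k:{1..K}. {j\<in>{1..F}. R j k \<noteq> None})"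
  have "card N = (\<Sum>k\<in>{1..K}. card {j\<in>{1..F}. R j k \<noteq> None})"
    unfolding N_def by (rule card_SigmaI) auto
  also have "\<dots> = (\<Sum>k\<in>{1..K}. F - Z)"
  proof (rule sum.cong)
    fix k assume k: "k \<in> {1..K}"
    have "{j\<in>{1..F}. R j k \<noteq> None} = {1..F} - E k" by (auto simp: E_def)
    moreover have "E k \<subseteq> {1..F}" by (auto simp: E_def)
    ultimately show "card {j\<in>{1..F}. R j k \<noteq> None} = F - Z"
      using cardE[OF k] card_Diff_subset[of "E k" "{1..F}"] finite_subset[of "E k" "{1..F}"] by simp
  qed simp
  finally have cardN: "card N = K * (F - Z)" by simp
  have "N = (\<Union>t\<in>S. C t)"
    unfolding N_def C_def using inS by fastforce
  hence "card N = (\<Sum>t\<in>S. card (C t))"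
    using finS finC by (simp add: card_UN_disjoint C_def disjoint_iff)
  hence sumeq: "(\<Sum>t\<in>S. card (C t)) = (\<Sum>t\<in>S. Z + 1)" using cardN cardS by simp
  have eqC: "card (C t) = Z + 1" if "t \<in> S" for t
  proof (rule ccontr)
    assume "card (C t) \<noteq> Z + 1"
    hence "card (C t) < Z + 1" using le[of t] by simp
    hence "(\<Sum>t\<in>S. card (C t)) < (\<Sum>t\<in>S. Z + 1)"
      using sum_strict_mono_ex1[OF finS, of "\<lambda>t. card (C t)" "\<lambda>_. Z+1"] le that by blast
    thus False using sumeq by simp
  qed
  define rows where "rows t = {j\<in>{1..F}. \<exists>k\<in>{1..K}. R j k = Some t}" for t
  have L: "E k = rows t - {j}" if j: "j\<in>{1..F}" and k: "k\<in>{1..K}" and r: "R j k = Some t" for j k t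
  proof -
    have kj: "(k,j) \<in> C t" using j k r by (simp add: C_def)
    have inj: "inj_on snd (C t - {(k,j)})"
    proof (rule inj_onI)
      fix x y assume "x \<in> C t - {(k,j)}" "y \<in> C t - {(k,j)}" "snd x = snd y"
      thus "x = y" using rowc[of "snd x" "fst x" "fst y" t] by (auto simp: C_def)
    qed
    have sub: "snd ` (C t - {(k,j)}) \<subseteq> E k"
      using kj by (auto simp: C_def E_def intro: c4)
    have "card (C t - {(k,j)}) = Z"
      using eqC[OF inS[OF j k r]] finC[of t] kj by simp
    hence "card (snd ` (C t - {(k,j)})) = card (E k)" using card_image[OF inj] cardE[OF k] by simp
    hence eq: "snd ` (C t - {(k,j)}) = E k"
      using sub by (intro card_subset_eq) (auto simp: E_def)
    have "snd ` (C t - {(k,j)}) = rows t - {j}"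
    proof
      show "snd ` (C t - {(k,j)}) \<subseteq> rows t - {j}"
      proof
        fix i assume "i \<in> snd ` (C t - {(k,j)})"
        then obtain k' where "(k',i) \<in> C t" "(k',i) \<noteq> (k,j)" by force
        hence k': "k'\<in>{1..K}" "i\<in>{1..F}" "R i k' = Some t" "(k',i) \<noteq> (k,j)" by (auto simp: C_def)
        have "i \<noteq> j"
        proof
          assume "i = j"
          hence "k' = k" using rowc[of j k' k t] k' j k r by simp
          thus False using k' \<open>i = j\<close> by simp
        qed
        thus "i \<in> rows t - {j}" using k' by (auto simp: rows_def)
      qed
      show "rows t - {j} \<subseteq> snd ` (C t - {(k,j)})"
      proof
        fix i assume "i \<in> rows t - {j}"
        then obtain k' where "k'\<in>{1..K}" "R i k' = Some t" "i \<in> {1..F}" "i \<noteq> j"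
          by (auto simp: rows_def)
        hence "(k',i) \<in> C t - {(k,j)}" by (auto simp: C_def)
        thus "i \<in> snd ` (C t - {(k,j)})" by force
      qed
    qed
    thus ?thesis using eq by simp
  qed
  define n where "n A = card {k\<in>{1..K}. E k = A}" for A
  have swap: "n A \<le> n (insert b A - {a})"
    if a: "a \<in> A" and b: "b \<in> {1..F}" "b \<notin> A" for A a b
  proof -
    have ex: "\<exists>k'. k'\<in>{1..K} \<and> R a k' = R b k \<and> E k' = insert b A - {a}"
      if k: "k\<in>{1..K}" "E k = A" for k
    proof -
      have "b \<notin> E k" using b(2) k(2) by simp
      hence "R b k \<noteq> None" using b(1) by (simp add: E_def)
      then obtain t where t: "R b k = Some t" by blast
      have Ek: "E k = rows t - {b}" using L[OF b(1) k(1) t] .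
      have RA: "rows t - {b} = A" using Ek k(2) by simp
      have "a \<in> rows t" using a RA by blast
      then obtain k' where k': "k'\<in>{1..K}" "R a k' = Some t" "a\<in>{1..F}" unfolding rows_def by blast
      have "b \<in> rows t" unfolding rows_def using b(1) k(1) t by blast
      have "E k' = rows t - {a}" using L[OF k'(3) k'(1) k'(2)] .
      also have "\<dots> = insert b A - {a}" using RA \<open>b \<in> rows t\<close> by auto
      finally show ?thesis using k'(1,2) t by auto
    qed
    define g where "g k = (SOME k'. k'\<in>{1..K} \<and> R a k' = R b k \<and> E k' = insert b A - {a})" for k
    have g: "g k\<in>{1..K} \<and> R a (g k) = R b k \<and> E (g k) = insert b A - {a}"
      if "k\<in>{1..K}" "E k = A" for k
      unfolding g_def by (rule someI_ex) (rule ex[OF that])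
    have "inj_on g {k\<in>{1..K}. E k = A}"
    proof (rule inj_onI)
      fix k1 k2 assume k1: "k1 \<in> {k\<in>{1..K}. E k = A}" and k2: "k2 \<in> {k\<in>{1..K}. E k = A}"
        and eq: "g k1 = g k2"
      have k1': "k1\<in>{1..K}" "E k1 = A" using k1 by auto
      have k2': "k2\<in>{1..K}" "E k2 = A" using k2 by auto
      have g1: "R a (g k1) = R b k1" using g[OF k1'] by (rule conjunct1[OF conjunct2])
      have g2: "R a (g k2) = R b k2" using g[OF k2'] by (rule conjunct1[OF conjunct2])
      have "R b k1 = R b k2" using g1 g2 eq by metis
      moreover have "b \<notin> E k1" using b(2) k1'(2) by simp
      hence "R b k1 \<noteq> None" using b(1) by (simp add: E_def)
      then obtain t where "R b k1 = Some t" by blast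
      ultimately show "k1 = k2" using rowc[of b k1 k2 t] b(1) k1'(1) k2'(1) by metis
    qed
    moreover have "g ` {k\<in>{1..K}. E k = A} \<subseteq> {k\<in>{1..K}. E k = insert b A - {a}}"
    proof
      fix x assume "x \<in> g ` {k\<in>{1..K}. E k = A}"
      then obtain k where kk: "k\<in>{1..K}" "E k = A" "x = g k" by blast
      have "g k\<in>{1..K}" "E (g k) = insert b A - {a}" using g[OF kk(1,2)] by blast+
      thus "x \<in> {k\<in>{1..K}. E k = insert b A - {a}}" using kk(3) by blast
    qed
    ultimately show ?thesis unfolding n_def
      by (intro card_inj_on_le) (simp_all add: finite_subset[of _ "{1..K}"])
  qed
  have swapeq: "n A = n (insert b A - {a})"
    if a: "a \<in> A" and b: "b \<in> {1..F}" "b \<notin> A" and AF: "A \<subseteq> {1..F}" for A a b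
  proof -
    have "insert a (insert b A - {a}) - {b} = A" using a b by auto
    moreover have "n (insert b A - {a}) \<le> n (insert a (insert b A - {a}) - {b})"
      by (rule swap) (use a b AF in auto)
    ultimately show ?thesis using swap[OF a b] by simp
  qed
  define Zs where "Zs = {B. B \<subseteq> {1..F} \<and> card B = Z}"
  have conn: "\<forall>A. A \<in> Zs \<longrightarrow> card (A - B) = m \<longrightarrow> n A = n B" if B: "B \<in> Zs" for B m
  proof (induction m rule: less_induct)
    case (less m)
    show ?case
    proof (intro allI impI)
      fix A assume A: "A \<in> Zs" and m: "card (A - B) = m"
      have finA: "finite A" and finB: "finite B" using A B finite_subset[of _ "{1..F}"] by (auto simp: Zs_def)
      show "n A = n B"
      proof (cases "A - B = {}")
        case True
        hence "A \<subseteq> B" by auto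
        hence "A = B" using A B finB card_subset_eq[of B A] by (simp add: Zs_def)
        thus ?thesis by simp
      next
        case False
        then obtain a where a: "a \<in> A" "a \<notin> B" by auto
        have "card (A - B) = card (B - A)"
          using A B finA finB by (simp add: Zs_def card_Diff_subset_Int Int_commute)
        moreover have "card (A - B) > 0" using False finA by (simp add: card_gt_0_iff)
        ultimately have "B - A \<noteq> {}" by (metis card.empty less_irrefl)
        then obtain b where b: "b \<in> B" "b \<notin> A" by auto
        have bF: "b \<in> {1..F}" using B b by (auto simp: Zs_def)
        define A' where "A' = insert b A - {a}"
        have A'Z: "A' \<in> Zs" using A a b bF finA by (auto simp: Zs_def A'_def card_insert_if)
        have "A' - B = (A - B) - {a}" using b by (auto simp: A'_def)
        hence "card (A' - B) < m" using m a finA \<open>card (A - B) > 0\<close> by (simp add: card_Diff1_less)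
        hence "n A' = n B" using less A'Z by blast
        moreover have "n A = n A'" unfolding A'_def by (rule swapeq) (use a b bF A in \<open>auto simp: Zs_def\<close>)
        ultimately show ?thesis by simp
      qed
    qed
  qed
  have EZs: "E k \<in> Zs" if "k \<in> {1..K}" for k
    using cardE[OF that] by (auto simp: Zs_def E_def)
  define l where "l = n (E 1)"
  have nl: "n B = l" if "B \<in> Zs" for B
    using conn[OF that, of "card (E 1 - B)"] EZs[of 1] assms(2) unfolding l_def by auto
  have "{1..K} = (\<Union>B\<in>Zs. {k\<in>{1..K}. E k = B})" using EZs by auto
  hence "card {1..K} = card (\<Union>B\<in>Zs. {k\<in>{1..K}. E k = B})" by (rule arg_cong)
  also have "\<dots> = (\<Sum>B\<in>Zs. card {k\<in>{1..K}. E k = B})"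
  proof (rule card_UN_disjoint)
    show "finite Zs" unfolding Zs_def
      by (rule finite_subset[of _ "Pow {1..F}"]) auto
  qed auto
  finally have "K = (\<Sum>B\<in>Zs. n B)" unfolding n_def by simp
  also have "\<dots> = (\<Sum>B\<in>Zs. l)" using nl by simp
  also have "\<dots> = l * (F choose Z)"
    unfolding Zs_def by (simp add: n_subsets)
  finally have K: "K = l * (F choose Z)" .
  hence "l \<ge> 1" using assms(2) by (cases l) auto
  thus ?thesis using K by blast
qed

end
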